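(* For every integer $k\ge1$, in $\mathbb{Z}[q,q^{-1}][[x]]$, \[ A_k(q,x)=\sum_{i=1}^{k}\ \sum_{1=t_1<t_2<\dots<t_{i+1}=k+1}\frac{(-1)^{k+i}q^{-ik+\sum_{j=1}^{i}t_j}\,x^k}{1-x}\prod_{j=1}^{i}\left(\frac{[j]}{1-[j+1]x}\right)^{t_{j+1}-t_j}. \]
   Context: $[m]=1+q+\dots+q^{m-1}$. For $0\le k\le n$, a $\hbox{Le}$-diagram in a $k\times(n-k)$ rectangle is a pair $(\lambda,D)$ with $\lambda=(\lambda_1\ge\dots\ge\lambda_k\ge0)$, $\lambda_1\le n-k$, and $D$ a filling of the Young diagram of $\lambda$ (row $i$ has $\lambda_i$ left-justified boxes, row 1 on top) by $0$'s and $1$'s such that no $0$ has a $1$ above it in its column and a $1$ to its left in its row; its rank is its number of $1$'s. $A_{k,n}(q)=\sum q^{\mathrm{rank}}$ over such diagrams (the generating function of cells of the totally nonnegative Grassmannian $Gr^+_{k,n}$ by dimension), $A_{k,n}(q)=0$ for $n<k$, and $A_k(q,x)=\sum_{n\ge0}A_{k,n}(q)x^n$. Fractions denote inverses in the power series ring. *)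

theory Defs
  imports "HOL-Computational_Algebra.Formal_Laurent_Series"
begin

text \<open>Laurent polynomials in q are embedded into the field rat fls of formal Laurent
  series in q; the power series ring in x over it is (rat fls) fps.\<close>

text \<open>A Le-diagram in a k x (n-k) rectangle: a partition lam (rows 1..k, zero elsewhere)
  with lam 1 \<le> n-k, weakly decreasing, and the set D of cells filled with 1.\<close>

definition young_cells :: "nat \<Rightarrow> (nat \<Rightarrow> nat) \<Rightarrow> (nat \<times> nat) set" where
  "young_cells k lam = {(i, j). 1 \<le> i \<and> i \<le> k \<and> 1 \<le> j \<and> j \<le> lam i}"

definition LeDiagrams :: "nat \<Rightarrow> nat \<Rightarrow> ((nat \<Rightarrow> nat) \<times> (nat \<times> nat) set) set" where
  "LeDiagrams k n = {(lam, D).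
     k \<le> n \<and>
     (\<forall>i. (i < 1 \<or> k < i) \<longrightarrow> lam i = 0) \<and>
     (\<forall>i. 1 \<le> i \<and> i < k \<longrightarrow> lam (Suc i) \<le> lam i) \<and>
     (k \<ge> 1 \<longrightarrow> lam 1 \<le> n - k) \<and>
     D \<subseteq> young_cells k lam \<and>
     (\<forall>i j. (i, j) \<in> young_cells k lam - D \<longrightarrow>
        \<not> ((\<exists>i'. i' < i \<and> (i', j) \<in> D) \<and> (\<exists>j'. j' < j \<and> (i, j') \<in> D)))}"

definition rank_Le :: "(nat \<Rightarrow> nat) \<times> (nat \<times> nat) set \<Rightarrow> nat" where
  "rank_Le d = card (snd d)"

text \<open>A_{k,n}(q), which is 0 for n < k (the set of diagrams is then empty).\<close>
definition A_kn :: "nat \<Rightarrow> nat \<Rightarrow> rat fls" where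
  "A_kn k n = (\<Sum>d\<in>LeDiagrams k n. fls_X ^ rank_Le d)"

definition A_gf :: "nat \<Rightarrow> rat fls fps" where
  "A_gf k = Abs_fps (\<lambda>n. A_kn k n)"

definition qint :: "nat \<Rightarrow> rat fls" where
  "qint m = (\<Sum>l<m. fls_X ^ l)"

definition tseqs :: "nat \<Rightarrow> nat \<Rightarrow> (nat \<Rightarrow> nat) set" where
  "tseqs k i = {t. t 1 = 1 \<and> t (i + 1) = k + 1 \<and> (\<forall>j. 1 \<le> j \<and> j \<le> i \<longrightarrow> t j < t (Suc j))
                 \<and> (\<forall>j. (j < 1 \<or> i + 1 < j) \<longrightarrow> t j = 0)}"

end

theory Submission
  imports Defs
begin
unbundle fps_syntax

abbreviation qq :: "rat fls" where "qq \<equiv> fls_X"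

lemma qint_0[simp]: "qint 0 = 0" by (simp add: qint_def)
lemma qint_Suc: "qint (Suc j) = qint j + qq ^ j" by (simp add: qint_def)
lemma qint_Suc': "qint (Suc j) = 1 + qq * qint j"
  unfolding qint_def by (subst sum.lessThan_Suc_shift) (simp add: sum_distrib_left)
lemma qint_mult: "qint j * (qq - 1) = qq ^ j - 1"
  by (induction j) (auto simp: qint_Suc algebra_simps)
lemma qint_nth0: "qint (Suc j) $$ 0 = 1"
proof (induction j)
  case 0 then show ?case by (simp add: qint_def)
next
  case (Suc j) then show ?case by (simp add: qint_Suc[of "Suc j"])
qed
lemma qint_nz: "qint (Suc j) \<noteq> 0"
  using qint_nth0[of j] by auto

lemma X_intpow_nat: "fls_X_intpow (int n) = (qq ^ n)"
  by (simp add: fls_X_power_conv_shift_1)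

abbreviation Z :: "rat fls poly" where "Z \<equiv> [:0,1:]"
abbreviation phi :: "rat fls poly" where "phi \<equiv> [:1, qq:]"
abbreviation dlt :: "rat fls poly" where "dlt \<equiv> [:1, qq - 1:]"

definition Lp :: "nat \<Rightarrow> rat fls poly" where "Lp j = [:qint j, qq ^ j:]"

fun Ep :: "nat \<Rightarrow> rat fls poly" where
  "Ep 0 = 1"
| "Ep (Suc j) = smult (inverse (qint (Suc j))) (Lp j * Ep j)"
declare Ep.simps(2)[simp del]

lemma pcomp_Lp: "pcompose (Lp j) phi = Lp (Suc j)"
  by (simp add: Lp_def pcompose_pCons qint_Suc algebra_simps)

lemma eigen: "Z * pcompose (Ep j) phi = Lp j * Ep j"
proof (induction j)
  case 0 then show ?case by (simp add: Lp_def pcompose_1)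
next
  case (Suc j)
  have "pcompose (Ep (Suc j)) phi = smult (inverse (qint (Suc j))) (Lp (Suc j) * pcompose (Ep j) phi)"
    by (simp only: Ep.simps pcompose_mult pcompose_smult pcomp_Lp)
  then have "Z * pcompose (Ep (Suc j)) phi = smult (inverse (qint (Suc j))) (Lp (Suc j) * (Z * pcompose (Ep j) phi))"
    by (simp add: ac_simps)
  also have "\<dots> = Lp (Suc j) * Ep (Suc j)" using Suc by (simp add: ac_simps Ep.simps)
  finally show ?case .
qed

lemma poly_Lp1: "poly (Lp j) 1 = qint (Suc j)"
  by (simp add: Lp_def qint_Suc)
lemma poly_Ep1: "poly (Ep j) 1 = 1"
  by (induction j) (auto simp: poly_Lp1 qint_nz Ep.simps)

definition up :: "nat \<Rightarrow> rat fls" where "up j = fls_X_intpow (1 - int j) * qint j"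
definition stay :: "nat \<Rightarrow> rat fls" where "stay j = - (fls_X_intpow (- int j) * qint j)"

lemma up0[simp]: "up 0 = 0" and stay0[simp]: "stay 0 = 0" by (auto simp: up_def stay_def)

lemma intpow_inv: "fls_X_intpow (- int j) * qq ^ j = 1"
proof -
  have "fls_X_intpow (- int j) * fls_X_intpow (int j) = (1::rat fls)"
    using fls_X_intpow_times_fls_X_intpow[of "- int j" "int j"] by simp
  then show ?thesis by (simp only: X_intpow_nat)
qed

lemma Z_Ep: "Z * Ep j = smult (up (Suc j)) (Ep (Suc j)) + smult (stay j) (Ep j)"
proof -
  have "smult (up (Suc j)) (Ep (Suc j)) = smult (fls_X_intpow (- int j) * (qint (Suc j) * inverse (qint (Suc j)))) (Lp j * Ep j)"
    by (simp add: up_def algebra_simps Ep.simps)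
  also have "\<dots> = smult (fls_X_intpow (- int j)) (Lp j * Ep j)" using qint_nz[of j] by simp
  also have "Lp j = [:qint j:] + smult (qq ^ j) Z" by (simp add: Lp_def)
  also have "smult (fls_X_intpow (- int j)) (([:qint j:] + smult (qq ^ j) Z) * Ep j)
     = smult (fls_X_intpow (- int j) * qint j) (Ep j) + smult (fls_X_intpow (- int j) * qq ^ j) (Z * Ep j)"
    by (simp add: algebra_simps smult_add_right)
  finally show ?thesis using intpow_inv[of j] by (simp add: stay_def)
qed

lemma eigen_dlt: "[:0, qq:] * pcompose (Ep j) phi + [:1, -1:] * Ep j = smult (qint (Suc j)) (dlt * Ep j)"
proof -
  have "[:0, qq:] * pcompose (Ep j) phi = smult qq (Z * pcompose (Ep j) phi)" by simp
  also have "\<dots> = smult qq (Lp j) * Ep j" using eigen[of j] by (simp only: mult_smult_left)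
  finally have "[:0, qq:] * pcompose (Ep j) phi + [:1, -1:] * Ep j = (smult qq (Lp j) + [:1, -1:]) * Ep j"
    by (simp add: algebra_simps)
  also have "smult qq (Lp j) + [:1, -1:] = smult (qint (Suc j)) dlt"
    using qint_mult[of "Suc j"] by (simp add: Lp_def qint_Suc' algebra_simps)
  finally show ?thesis by (simp only: mult_smult_left)
qed


fun mp :: "nat \<Rightarrow> rat fls poly" where
  "mp 0 = 1"
| "mp (Suc u) = mp u + [:0, qq:] * mp u + monom 1 (Suc u) - monom 1 u"

lemma monom_Suc_Z: "monom (1::rat fls) (Suc u) = Z * monom 1 u"
  by (simp add: monom_Suc)

lemma mp_Suc': "mp (Suc u) = phi * mp u + (Z - 1) * monom 1 u"
proof -
  have "phi * mp u = mp u + [:0,qq:] * mp u" by (simp add: one_pCons)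
  moreover have "(Z - 1) * monom 1 u = monom (1::rat fls) (Suc u) - monom 1 u"
    by (simp add: left_diff_distrib monom_Suc)
  ultimately show ?thesis by simp
qed

lemma mp_key: "dlt * mp u = [:0, qq:] * phi ^ u + [:1, -1:] * monom 1 u"
proof (induction u)
  case 0 then show ?case by (simp add: one_pCons)
next
  case (Suc u)
  have id: "phi * [:1, -1:] + dlt * (Z - 1) = [:1, -1:] * Z"
    by (simp add: algebra_simps one_pCons)
  have "dlt * mp (Suc u) = phi * (dlt * mp u) + dlt * (Z - 1) * monom 1 u"
    by (simp only: mp_Suc' distrib_left ac_simps)
  also have "\<dots> = phi * ([:0, qq:] * phi ^ u + [:1, -1:] * monom 1 u) + dlt * (Z - 1) * monom 1 u"
    using Suc by simp
  also have "\<dots> = [:0, qq:] * phi ^ Suc u + (phi * [:1, -1:] + dlt * (Z - 1)) * monom 1 u"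
    by (simp only: distrib_left distrib_right power_Suc ac_simps)
  also have "\<dots> = [:0, qq:] * phi ^ Suc u + [:1, -1:] * monom 1 (Suc u)"
    by (simp only: id monom_Suc_Z mult.assoc)
  finally show ?case .
qed

fun om :: "nat \<Rightarrow> nat \<Rightarrow> nat \<Rightarrow> rat fls" where
  "om 0 m j = (if j = 0 then 1 else 0)"
| "om (Suc k) 0 j = up j * om k 0 (j - 1) + stay j * om k 0 j"
| "om (Suc k) (Suc m) j = qint (Suc j) * om (Suc k) m j + up j * om k (Suc m) (j - 1) + stay j * om k (Suc m) j"

lemma om_zero: "k < j \<Longrightarrow> om k m j = 0"
  by (induction k m j rule: om.induct) auto

lemma Z_sum: 
  assumes "b (Suc k) = 0"
  shows "Z * (\<Sum>j\<le>k. smult (b j) (Ep j)) = (\<Sum>j\<le>Suc k. smult (up j * b (j - 1) + stay j * b j) (Ep j))"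
proof -
  have "Z * (\<Sum>j\<le>k. smult (b j) (Ep j)) = (\<Sum>j\<le>k. smult (b j) (Z * Ep j))"
    by (simp only: sum_distrib_left mult_smult_right)
  also have "\<dots> = (\<Sum>j\<le>k. smult (up (Suc j) * b j) (Ep (Suc j))) + (\<Sum>j\<le>k. smult (stay j * b j) (Ep j))"
    by (simp only: Z_Ep smult_add_right sum.distrib smult_smult) (simp only: mult.commute)
  also have "(\<Sum>j\<le>k. smult (up (Suc j) * b j) (Ep (Suc j))) = (\<Sum>j\<le>Suc k. smult (up j * b (j - 1)) (Ep j))"
    by (subst sum.atMost_Suc_shift) simp
  also have "(\<Sum>j\<le>k. smult (stay j * b j) (Ep j)) = (\<Sum>j\<le>Suc k. smult (stay j * b j) (Ep j))"
    using assms by simp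
  finally show ?thesis by (simp add: sum.distrib smult_add_left)
qed

lemma eig_sum:
  "[:0, qq:] * pcompose (\<Sum>j\<le>k. smult (a j) (Ep j)) phi + [:1, -1:] * (\<Sum>j\<le>k. smult (a j) (Ep j))
   = dlt * (\<Sum>j\<le>k. smult (qint (Suc j) * a j) (Ep j))"
proof -
  have "[:0, qq:] * pcompose (\<Sum>j\<le>k. smult (a j) (Ep j)) phi + [:1, -1:] * (\<Sum>j\<le>k. smult (a j) (Ep j))
     = (\<Sum>j\<le>k. smult (a j) ([:0, qq:] * pcompose (Ep j) phi + [:1, -1:] * Ep j))"
    by (simp add: pcompose_sum pcompose_smult sum_distrib_left sum.distrib smult_add_right mult_smult_right)
  also have "\<dots> = (\<Sum>j\<le>k. smult (a j) (smult (qint (Suc j)) (dlt * Ep j)))"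
    by (simp only: eigen_dlt)
  finally show ?thesis by (simp add: sum_distrib_left mult_smult_right mult.commute)
qed

lemma dlt_nz: "dlt \<noteq> 0" by simp

lemma W_expand:
  fixes W :: "nat \<Rightarrow> nat \<Rightarrow> rat fls poly"
  assumes R0: "\<And>m. W 0 m = 1"
    and R1: "\<And>k. W (Suc k) 0 = Z * W k 0"
    and R2: "\<And>k m. dlt * W (Suc k) (Suc m) = [:0, qq:] * pcompose (W (Suc k) m) phi + [:1, -1:] * W (Suc k) m + dlt * (Z * W k (Suc m))"
  shows "W k m = (\<Sum>j\<le>k. smult (om k m j) (Ep j))"
proof (induction k arbitrary: m)
  case 0 then show ?case by (simp add: R0)
next
  case (Suc k)
  note IHk = Suc
  show ?case
  proof (induction m)
    case 0
    have "W (Suc k) 0 = Z * (\<Sum>j\<le>k. smult (om k 0 j) (Ep j))" by (simp add: R1 IHk)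
    also have "\<dots> = (\<Sum>j\<le>Suc k. smult (om (Suc k) 0 j) (Ep j))"
      by (subst Z_sum) (auto simp: om_zero)
    finally show ?case .
  next
    case (Suc m)
    have "dlt * W (Suc k) (Suc m) = dlt * (\<Sum>j\<le>Suc k. smult (qint (Suc j) * om (Suc k) m j) (Ep j))
        + dlt * (\<Sum>j\<le>Suc k. smult (up j * om k (Suc m) (j - 1) + stay j * om k (Suc m) j) (Ep j))"
      unfolding R2 Suc IHk[of "Suc m"] eig_sum
      by (subst Z_sum) (auto simp: om_zero)
    also have "\<dots> = dlt * (\<Sum>j\<le>Suc k. smult (om (Suc k) (Suc m) j) (Ep j))"
    proof -
      have "(\<Sum>j\<le>Suc k. smult (qint (Suc j) * om (Suc k) m j) (Ep j))
        + (\<Sum>j\<le>Suc k. smult (up j * om k (Suc m) (j - 1) + stay j * om k (Suc m) j) (Ep j))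
        = (\<Sum>j\<le>Suc k. smult (om (Suc k) (Suc m) j) (Ep j))"
        unfolding sum.distrib[symmetric] by (rule sum.cong) (simp_all add: smult_add_left)
      then show ?thesis by (simp only: distrib_left[symmetric])
    qed
    finally show ?case by (rule mult_left_cancel[THEN iffD1, OF dlt_nz])
  qed
qed


definition Om :: "nat \<Rightarrow> nat \<Rightarrow> rat fls fps" where "Om k j = Abs_fps (\<lambda>m. om k m j)"

abbreviation RR :: "nat \<Rightarrow> rat fls fps" where
  "RR j \<equiv> inverse (1 - fps_const (qint (Suc j)) * fps_X)"

lemma geo: "Abs_fps (\<lambda>n. 1::rat fls) = inverse (1 - fps_X)"
proof -
  have "inverse (inverse (Abs_fps (\<lambda>n. 1::rat fls))) = Abs_fps (\<lambda>n. 1::rat fls)"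
    by (rule fps_inverse_idempotent) simp
  then show ?thesis by (simp add: fps_inverse_gp')
qed

lemma Om0: "Om 0 j = (if j = 0 then inverse (1 - fps_X) else 0)"
  by (auto simp: Om_def geo[symmetric] fps_eq_iff)

lemma Om_rec: "(1 - fps_const (qint (Suc j)) * fps_X) * Om (Suc k) j
   = fps_const (up j) * Om k (j - 1) + fps_const (stay j) * Om k j"
proof -
  have "(1 - fps_const (qint (Suc j)) * fps_X) * Om (Suc k) j = Om (Suc k) j - fps_const (qint (Suc j)) * (fps_X * Om (Suc k) j)"
    by (simp add: algebra_simps)
  also have "\<dots> = fps_const (up j) * Om k (j - 1) + fps_const (stay j) * Om k j"
  proof (rule fps_ext)
    fix n show "(Om (Suc k) j - fps_const (qint (Suc j)) * (fps_X * Om (Suc k) j)) $ n =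
      (fps_const (up j) * Om k (j - 1) + fps_const (stay j) * Om k j) $ n"
      by (cases n) (simp_all add: Om_def)
  qed
  finally show ?thesis .
qed

lemma Om_Suc: "Om (Suc k) j = RR j * (fps_const (up j) * Om k (j - 1) + fps_const (stay j) * Om k j)"
proof -
  have "RR j * (1 - fps_const (qint (Suc j)) * fps_X) = 1"
    by (rule inverse_mult_eq_1) simp
  then have "Om (Suc k) j = RR j * ((1 - fps_const (qint (Suc j)) * fps_X) * Om (Suc k) j)"
    by (simp add: mult.assoc[symmetric])
  then show ?thesis by (simp only: Om_rec)
qed

definition cc :: "nat \<Rightarrow> rat fls fps" where
  "cc j = fps_const (qint j) * inverse (1 - fps_const (qint (j + 1)) * fps_X)"

definition wt :: "nat \<Rightarrow> nat \<Rightarrow> (nat \<Rightarrow> nat) \<Rightarrow> rat fls fps" where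
  "wt k i t = fps_const ((-1) ^ (k + i) * fls_X_intpow (- (int i * int k) + (\<Sum>j=1..i. int (t j))))
       * (\<Prod>j=1..i. cc j ^ (t (j + 1) - t j))"

definition T :: "nat \<Rightarrow> nat \<Rightarrow> rat fls fps" where
  "T k i = (\<Sum>t\<in>tseqs k i. wt k i t)"

lemma tseqs_iff: "t \<in> tseqs k i \<longleftrightarrow> t 1 = 1 \<and> t (i + 1) = k + 1 \<and> (\<forall>j. 1 \<le> j \<and> j \<le> i \<longrightarrow> t j < t (Suc j))
                 \<and> (\<forall>j. (j < 1 \<or> i + 1 < j) \<longrightarrow> t j = 0)"
  by (simp add: tseqs_def)

lemma tseqs_zero: assumes "t \<in> tseqs k i" "j < 1 \<or> i + 1 < j" shows "t j = 0"
proof -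
  from assms(1) have h: "\<forall>j. (j < 1 \<or> i + 1 < j) \<longrightarrow> t j = 0"
    unfolding tseqs_def mem_Collect_eq by (rule conjunct2[OF conjunct2[OF conjunct2]])
  show ?thesis by (rule mp[OF spec[OF h, of j] assms(2)])
qed

lemma tseqs_ge: assumes "t \<in> tseqs k i" shows "1 \<le> j \<Longrightarrow> j \<le> i + 1 \<Longrightarrow> j \<le> t j"
proof (induction j rule: nat_induct_at_least)
  case base then show ?case using assms by (simp add: tseqs_iff)
next
  case (Suc n)
  then have "t n < t (Suc n)" using assms by (simp add: tseqs_iff)
  then show ?case using Suc by simp
qed

lemma tseqs_mono: assumes "t \<in> tseqs k i" "1 \<le> j" "j \<le> j'" "j' \<le> i + 1" shows "t j \<le> t j'"
  using assms(3,4)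
proof (induction j' rule: dec_induct)
  case base then show ?case by simp
next
  case (step n)
  then have "t n < t (Suc n)" using assms by (simp add: tseqs_iff)
  then show ?case using step by simp
qed

lemma tseqs_bound: assumes "t \<in> tseqs k i" shows "t j \<le> k + 1"
proof (cases "1 \<le> j \<and> j \<le> i + 1")
  case True
  then have "t j \<le> t (i + 1)" using tseqs_mono[OF assms] by auto
  then show ?thesis using assms by (simp add: tseqs_iff)
next
  case False then show ?thesis using tseqs_zero[OF assms, of j] by auto
qed

lemma finite_funs:
  assumes "finite A"
  shows "finite {f :: nat \<Rightarrow> nat. (\<forall>j. j \<notin> A \<longrightarrow> f j = 0) \<and> (\<forall>j. f j \<le> N)}"
proof -
  let ?S = "{f :: nat \<Rightarrow> nat. (\<forall>j. j \<notin> A \<longrightarrow> f j = 0) \<and> (\<forall>j. f j \<le> N)}"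
  have "inj_on (\<lambda>f. restrict f A) ?S"
  proof (rule inj_onI)
    fix f g assume "f \<in> ?S" "g \<in> ?S" "restrict f A = restrict g A"
    note h = this
    show "f = g"
    proof
      fix x show "f x = g x"
      proof (cases "x \<in> A")
        case True then show ?thesis using fun_cong[OF h(3), of x] by simp
      next
        case False then show ?thesis using h(1,2) by simp
      qed
    qed
  qed
  moreover have "(\<lambda>f. restrict f A) ` ?S \<subseteq> PiE A (\<lambda>_. {..N})" by auto
  moreover have "finite (PiE A (\<lambda>_. {..N}))" using assms by (simp add: finite_PiE)
  ultimately show ?thesis by (meson finite_imageD finite_subset)
qed

lemma tseqs_finite: "finite (tseqs k i)"
proof -
  have "tseqs k i \<subseteq> {f :: nat \<Rightarrow> nat. (\<forall>j. j \<notin> {1..i+1} \<longrightarrow> f j = 0) \<and> (\<forall>j. f j \<le> k + 1)}"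
  proof
    fix t assume t: "t \<in> tseqs k i"
    have "\<forall>j. j \<notin> {1..i+1} \<longrightarrow> t j = 0"
    proof (intro allI impI)
      fix j assume "j \<notin> {1..i+1}"
      then have "j < 1 \<or> i + 1 < j" by auto
      then show "t j = 0" by (rule tseqs_zero[OF t])
    qed
    then show "t \<in> {f :: nat \<Rightarrow> nat. (\<forall>j. j \<notin> {1..i+1} \<longrightarrow> f j = 0) \<and> (\<forall>j. f j \<le> k + 1)}"
      using tseqs_bound[OF t] by blast
  qed
  then show ?thesis using finite_funs[of "{1..i+1}" "k+1"] finite_subset by auto
qed

lemma tseqs_empty0: "tseqs (Suc k) 0 = {}"
  by (auto simp: tseqs_iff)

lemma tseqs_empty: assumes "k < i" shows "tseqs k i = {}"
proof (rule ccontr)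
  assume "tseqs k i \<noteq> {}"
  then obtain t where t: "t \<in> tseqs k i" by auto
  have "i + 1 \<le> t (i + 1)" using tseqs_ge[OF t, of "i+1"] by simp
  then show False using t assms by (simp add: tseqs_iff)
qed

lemma T_0_0: "T 0 0 = 1"
proof -
  have "tseqs 0 0 = {(\<lambda>j. if j = 1 then 1 else 0)}"
  proof (intro set_eqI iffI)
    fix t assume t: "t \<in> tseqs 0 0"
    have "t j = (if j = 1 then 1 else 0)" for j
    proof (cases "j = 1")
      case True then show ?thesis using t by (simp add: tseqs_iff)
    next
      case False then have "j < 1 \<or> 0 + 1 < j" by arith
      then show ?thesis using tseqs_zero[OF t] False by simp
    qed
    then show "t \<in> {(\<lambda>j. if j = 1 then 1 else 0)}" by auto
  qed (auto simp: tseqs_iff)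
  then show ?thesis by (simp add: T_def wt_def)
qed

lemma T_Suc_0: "T (Suc k) 0 = 0" by (simp add: T_def tseqs_empty0)
lemma T_gt: "k < i \<Longrightarrow> T k i = 0" by (simp add: T_def tseqs_empty)


lemma tseqs_step: "t \<in> tseqs k i \<Longrightarrow> 1 \<le> j \<Longrightarrow> j \<le> i \<Longrightarrow> t j < t (Suc j)"
  by (simp add: tseqs_iff)

lemma cc_RR: "cc j = fps_const (qint j) * RR j"
  by (simp add: cc_def)

lemma A_mem1: assumes t: "t \<in> tseqs (Suc k) (Suc i)" and ti: "t (Suc i) = Suc k"
  shows "t(Suc (Suc i) := 0) \<in> tseqs k i"
  unfolding tseqs_iff
proof (intro conjI allI impI)
  show "(t(Suc (Suc i) := 0)) 1 = 1" using t by (simp add: tseqs_iff)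
  show "(t(Suc (Suc i) := 0)) (i + 1) = k + 1" using ti by simp
  fix j
  show "1 \<le> j \<and> j \<le> i \<Longrightarrow> (t(Suc (Suc i) := 0)) j < (t(Suc (Suc i) := 0)) (Suc j)"
    using t by (simp add: tseqs_iff)
  assume "j < 1 \<or> i + 1 < j"
  then consider "j < 1 \<or> Suc i + 1 < j" | "j = Suc (Suc i)" by arith
  then show "(t(Suc (Suc i) := 0)) j = 0"
    by cases (simp_all add: tseqs_zero[OF t])
qed

lemma A_mem2: assumes s: "s \<in> tseqs k i"
  shows "s(Suc (Suc i) := Suc (Suc k)) \<in> tseqs (Suc k) (Suc i)" "(s(Suc (Suc i) := Suc (Suc k))) (Suc i) = Suc k"
proof -
  show "(s(Suc (Suc i) := Suc (Suc k))) (Suc i) = Suc k" using s by (simp add: tseqs_iff)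
  show "s(Suc (Suc i) := Suc (Suc k)) \<in> tseqs (Suc k) (Suc i)"
    unfolding tseqs_iff
  proof (intro conjI allI impI)
    show "(s(Suc (Suc i) := Suc (Suc k))) 1 = 1" using s by (simp add: tseqs_iff)
    show "(s(Suc (Suc i) := Suc (Suc k))) (Suc i + 1) = Suc k + 1" by simp
    fix j
    show "1 \<le> j \<and> j \<le> Suc i \<Longrightarrow> (s(Suc (Suc i) := Suc (Suc k))) j < (s(Suc (Suc i) := Suc (Suc k))) (Suc j)"
    proof -
      assume j: "1 \<le> j \<and> j \<le> Suc i"
      then consider "j \<le> i" | "j = Suc i" by arith
      then show ?thesis
      proof cases
        case 1 then show ?thesis using s j by (simp add: tseqs_iff)
      next
        case 2 then show ?thesis using s by (simp add: tseqs_iff)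
      qed
    qed
    assume "j < 1 \<or> Suc i + 1 < j"
    then have "j < 1 \<or> i + 1 < j" "j \<noteq> Suc (Suc i)" by auto
    then show "(s(Suc (Suc i) := Suc (Suc k))) j = 0" using tseqs_zero[OF s] by simp
  qed
qed

lemma s_zero: "s \<in> tseqs k i \<Longrightarrow> s (Suc (Suc i)) = 0"
  using tseqs_zero[of s k i "Suc (Suc i)"] by simp

lemma B_mem1: assumes t: "t \<in> tseqs (Suc k) (Suc i)" and ti: "t (Suc i) \<noteq> Suc k"
  shows "t(Suc (Suc i) := Suc k) \<in> tseqs k (Suc i)"
  unfolding tseqs_iff
proof (intro conjI allI impI)
  show "(t(Suc (Suc i) := Suc k)) 1 = 1" using t by (simp add: tseqs_iff)
  show "(t(Suc (Suc i) := Suc k)) (Suc i + 1) = k + 1" by simp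
  fix j
  show "1 \<le> j \<and> j \<le> Suc i \<Longrightarrow> (t(Suc (Suc i) := Suc k)) j < (t(Suc (Suc i) := Suc k)) (Suc j)"
  proof -
    assume j: "1 \<le> j \<and> j \<le> Suc i"
    then consider "j \<le> i" | "j = Suc i" by arith
    then show ?thesis
    proof cases
      case 1 then show ?thesis using t j by (simp add: tseqs_iff)
    next
      case 2
      have "t (Suc i) < t (Suc (Suc i))" using tseqs_step[OF t, of "Suc i"] by simp
      then have "t (Suc i) < Suc k" using t ti by (simp add: tseqs_iff)
      then show ?thesis using 2 by simp
    qed
  qed
  assume "j < 1 \<or> Suc i + 1 < j"
  then have "j < 1 \<or> Suc i + 1 < j" "j \<noteq> Suc (Suc i)" by auto
  then show "(t(Suc (Suc i) := Suc k)) j = 0" using tseqs_zero[OF t] by simp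
qed

lemma B_mem2: assumes s: "s \<in> tseqs k (Suc i)"
  shows "s(Suc (Suc i) := Suc (Suc k)) \<in> tseqs (Suc k) (Suc i)" "(s(Suc (Suc i) := Suc (Suc k))) (Suc i) \<noteq> Suc k"
proof -
  have "s (Suc i) < s (Suc (Suc i))" using tseqs_step[OF s, of "Suc i"] by simp
  then show "(s(Suc (Suc i) := Suc (Suc k))) (Suc i) \<noteq> Suc k" using s by (simp add: tseqs_iff)
  show "s(Suc (Suc i) := Suc (Suc k)) \<in> tseqs (Suc k) (Suc i)"
    unfolding tseqs_iff
  proof (intro conjI allI impI)
    show "(s(Suc (Suc i) := Suc (Suc k))) 1 = 1" using s by (simp add: tseqs_iff)
    show "(s(Suc (Suc i) := Suc (Suc k))) (Suc i + 1) = Suc k + 1" by simp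
    fix j
    show "1 \<le> j \<and> j \<le> Suc i \<Longrightarrow> (s(Suc (Suc i) := Suc (Suc k))) j < (s(Suc (Suc i) := Suc (Suc k))) (Suc j)"
    proof -
      assume j: "1 \<le> j \<and> j \<le> Suc i"
      then consider "j \<le> i" | "j = Suc i" by arith
      then show ?thesis
      proof cases
        case 1 then show ?thesis using s j by (simp add: tseqs_iff)
      next
        case 2
        have "s (Suc i) < s (Suc (Suc i))" using tseqs_step[OF s, of "Suc i"] by simp
        then show ?thesis using 2 s by (simp add: tseqs_iff)
      qed
    qed
    assume "j < 1 \<or> Suc i + 1 < j"
    then have "j < 1 \<or> Suc i + 1 < j" "j \<noteq> Suc (Suc i)" by auto
    then show "(s(Suc (Suc i) := Suc (Suc k))) j = 0" using tseqs_zero[OF s] by simp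
  qed
qed

lemma sum_upd: "(\<Sum>j=1..i. f ((t(Suc (Suc i) := v)) j)) = (\<Sum>j=1..i. f (t j))"
  by (rule sum.cong) auto
lemma sum_upd': "(\<Sum>j=1..Suc i. f ((t(Suc (Suc i) := v)) j)) = (\<Sum>j=1..Suc i. f (t j))"
  by (rule sum.cong) auto
lemma prod_upd: "(\<Prod>j=1..i. cc j ^ ((t(Suc (Suc i) := v)) (j + 1) - (t(Suc (Suc i) := v)) j))
   = (\<Prod>j=1..i. cc j ^ (t (j + 1) - t j))"
  by (rule prod.cong) auto

lemma wt_A: assumes t: "t \<in> tseqs (Suc k) (Suc i)" and ti: "t (Suc i) = Suc k"
  shows "wt (Suc k) (Suc i) t = fps_const (up (Suc i)) * RR (Suc i) * wt k i (t(Suc (Suc i) := 0))"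
proof -
  define S where "S = (\<Sum>j=1..i. int (t j))"
  define P where "P = (\<Prod>j=1..i. cc j ^ (t (j + 1) - t j))"
  have t2: "t (Suc (Suc i)) = Suc (Suc k)" using t by (simp add: tseqs_iff)
  have e: "- (int (Suc i) * int (Suc k)) + (S + int (Suc k)) = (- int i) + (- (int i * int k) + S)"
    by (simp add: algebra_simps)
  have "wt (Suc k) (Suc i) t = fps_const ((-1) ^ (k + i) * fls_X_intpow (- (int (Suc i) * int (Suc k)) + (S + int (Suc k))))
      * (P * cc (Suc i))"
    using ti t2 by (simp add: wt_def S_def P_def)
  also have "\<dots> = fps_const (fls_X_intpow (- int i) * qint (Suc i)) * RR (Suc i) * (fps_const ((-1) ^ (k + i) * fls_X_intpow (- (int i * int k) + S)) * P)"
    unfolding e fls_X_intpow_times_fls_X_intpow[symmetric] cc_RR by (simp add: ac_simps)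
  also have "\<dots> = fps_const (up (Suc i)) * RR (Suc i) * wt k i (t(Suc (Suc i) := 0))"
    by (simp add: wt_def up_def S_def P_def sum_upd[where f = int] prod_upd)
  finally show ?thesis .
qed

lemma wt_B: assumes t: "t \<in> tseqs (Suc k) (Suc i)" and ti: "t (Suc i) \<noteq> Suc k"
  shows "wt (Suc k) (Suc i) t = fps_const (stay (Suc i)) * RR (Suc i) * wt k (Suc i) (t(Suc (Suc i) := Suc k))"
proof -
  define S where "S = (\<Sum>j=1..Suc i. int (t j))"
  define P where "P = (\<Prod>j=1..i. cc j ^ (t (j + 1) - t j))"
  have t2: "t (Suc (Suc i)) = Suc (Suc k)" using t by (simp add: tseqs_iff)
  have "t (Suc i) < t (Suc (Suc i))" using tseqs_step[OF t, of "Suc i"] by simp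
  then have lt: "t (Suc i) \<le> k" using t2 ti by simp
  then have ex: "Suc (Suc k) - t (Suc i) = Suc (Suc k - t (Suc i))" by simp
  have e: "- (int (Suc i) * int (Suc k)) + S = (- int (Suc i)) + (- (int (Suc i) * int k) + S)"
    by (simp add: algebra_simps)
  have "wt (Suc k) (Suc i) t = fps_const ((-1) ^ (Suc k + Suc i) * fls_X_intpow (- (int (Suc i) * int (Suc k)) + S))
      * (P * cc (Suc i) ^ (Suc (Suc k) - t (Suc i)))"
    using t2 by (simp add: wt_def S_def P_def)
  also have "\<dots> = fps_const (- (fls_X_intpow (- int (Suc i)) * qint (Suc i))) * RR (Suc i) * (fps_const ((-1) ^ (k + Suc i) * fls_X_intpow (- (int (Suc i) * int k) + S)) * (P * cc (Suc i) ^ (Suc k - t (Suc i))))"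
    unfolding e fls_X_intpow_times_fls_X_intpow[symmetric] ex power_Suc cc_RR by (simp add: ac_simps)
  also have "\<dots> = fps_const (stay (Suc i)) * RR (Suc i) * wt k (Suc i) (t(Suc (Suc i) := Suc k))"
    by (simp add: wt_def stay_def S_def P_def sum_upd'[where f = int] prod_upd)
  finally show ?thesis .
qed

lemma T_rec: "T (Suc k) (Suc i) = fps_const (up (Suc i)) * RR (Suc i) * T k i + fps_const (stay (Suc i)) * RR (Suc i) * T k (Suc i)"
proof -
  let ?A = "{t \<in> tseqs (Suc k) (Suc i). t (Suc i) = Suc k}"
  let ?B = "{t \<in> tseqs (Suc k) (Suc i). t (Suc i) \<noteq> Suc k}"
  have split: "tseqs (Suc k) (Suc i) = ?A \<union> ?B" by auto
  have fin: "finite ?A" "finite ?B" using tseqs_finite by auto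
  have "T (Suc k) (Suc i) = sum (wt (Suc k) (Suc i)) ?A + sum (wt (Suc k) (Suc i)) ?B"
    unfolding T_def by (subst split, rule sum.union_disjoint) (use fin in auto)
  also have "sum (wt (Suc k) (Suc i)) ?A = (\<Sum>s\<in>tseqs k i. fps_const (up (Suc i)) * RR (Suc i) * wt k i s)"
  proof (rule sum.reindex_bij_witness[where j = "\<lambda>t. t(Suc (Suc i) := 0)" and i = "\<lambda>s. s(Suc (Suc i) := Suc (Suc k))"])
    fix a assume a: "a \<in> ?A"
    then have "a (Suc (Suc i)) = Suc (Suc k)" by (simp add: tseqs_iff)
    then show "(a(Suc (Suc i) := 0))(Suc (Suc i) := Suc (Suc k)) = a" by auto
    show "a(Suc (Suc i) := 0) \<in> tseqs k i" using A_mem1 a by auto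
    show "fps_const (up (Suc i)) * RR (Suc i) * wt k i (a(Suc (Suc i) := 0)) = wt (Suc k) (Suc i) a"
      using wt_A a by auto
  next
    fix b assume b: "b \<in> tseqs k i"
    show "(b(Suc (Suc i) := Suc (Suc k)))(Suc (Suc i) := 0) = b" using s_zero[OF b] by auto
    show "b(Suc (Suc i) := Suc (Suc k)) \<in> ?A" using A_mem2[OF b] by auto
  qed
  also have "sum (wt (Suc k) (Suc i)) ?B = (\<Sum>s\<in>tseqs k (Suc i). fps_const (stay (Suc i)) * RR (Suc i) * wt k (Suc i) s)"
  proof (rule sum.reindex_bij_witness[where j = "\<lambda>t. t(Suc (Suc i) := Suc k)" and i = "\<lambda>s. s(Suc (Suc i) := Suc (Suc k))"])
    fix a assume a: "a \<in> ?B"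
    then have "a (Suc (Suc i)) = Suc (Suc k)" by (simp add: tseqs_iff)
    then show "(a(Suc (Suc i) := Suc k))(Suc (Suc i) := Suc (Suc k)) = a" by auto
    show "a(Suc (Suc i) := Suc k) \<in> tseqs k (Suc i)" using B_mem1 a by auto
    show "fps_const (stay (Suc i)) * RR (Suc i) * wt k (Suc i) (a(Suc (Suc i) := Suc k)) = wt (Suc k) (Suc i) a"
      using wt_B a by auto
  next
    fix b assume b: "b \<in> tseqs k (Suc i)"
    have "b (Suc (Suc i)) = Suc k" using b by (simp add: tseqs_iff)
    then show "(b(Suc (Suc i) := Suc (Suc k)))(Suc (Suc i) := Suc k) = b" by auto
    show "b(Suc (Suc i) := Suc (Suc k)) \<in> ?B" using B_mem2[OF b] by auto
  qed
  finally show ?thesis by (simp add: T_def sum_distrib_left)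
qed


lemma Om_T: "Om k i = inverse (1 - fps_X) * T k i"
proof (induction k arbitrary: i)
  case 0 then show ?case by (cases "i = 0") (auto simp: Om0 T_0_0 T_gt)
next
  case (Suc k)
  show ?case
  proof (cases i)
    case 0 then show ?thesis by (simp add: Om_Suc T_Suc_0)
  next
    case (Suc i')
    show ?thesis unfolding Suc Om_Suc T_rec
      by (simp add: Suc.IH algebra_simps)
  qed
qed

lemma assembly:
  fixes k :: nat
  assumes k: "k \<ge> 1"
    and Z0: "\<And>n. n < k \<Longrightarrow> A_kn k n = 0"
    and Am: "\<And>m. A_kn k (k + m) = (\<Sum>j\<le>k. om k m j)"
  shows "A_gf k =
    (\<Sum>i=1..k. \<Sum>t\<in>tseqs k i.
       fps_const ((-1) ^ (k + i) * fls_X_intpow (- (int i * int k) + (\<Sum>j=1..i. int (t j))))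
       * fps_X ^ k * inverse (1 - fps_X)
       * (\<Prod>j=1..i. (fps_const (qint j) * inverse (1 - fps_const (qint (j + 1)) * fps_X))
                        ^ (t (j + 1) - t j)))"
proof -
  have G: "A_gf k = fps_X ^ k * (\<Sum>j\<le>k. Om k j)"
  proof (rule fps_ext)
    fix n
    show "A_gf k $ n = (fps_X ^ k * (\<Sum>j\<le>k. Om k j)) $ n"
    proof (cases "n < k")
      case True then show ?thesis by (simp add: A_gf_def fps_X_power_mult_nth Z0)
    next
      case False
      then have "n = k + (n - k)" by simp
      then have "A_kn k n = (\<Sum>j\<le>k. om k (n - k) j)" using Am by metis
      then show ?thesis using False by (simp add: A_gf_def fps_X_power_mult_nth fps_sum_nth Om_def)
    qed
  qed
  obtain k' where k': "k = Suc k'" using k by (cases k) auto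
  have ins: "{..k} = insert 0 {1..k}" by auto
  have "(\<Sum>j\<le>k. Om k j) = (\<Sum>j=1..k. inverse (1 - fps_X) * T k j)"
    unfolding ins by (subst sum.insert) (auto simp: Om_T k' T_Suc_0)
  then have "A_gf k = (\<Sum>i=1..k. fps_X ^ k * inverse (1 - fps_X) * T k i)"
    using G by (simp add: sum_distrib_left mult.assoc)
  also have "\<dots> = (\<Sum>i=1..k. \<Sum>t\<in>tseqs k i.
       fps_const ((-1) ^ (k + i) * fls_X_intpow (- (int i * int k) + (\<Sum>j=1..i. int (t j))))
       * fps_X ^ k * inverse (1 - fps_X)
       * (\<Prod>j=1..i. (fps_const (qint j) * inverse (1 - fps_const (qint (j + 1)) * fps_X))
                        ^ (t (j + 1) - t j)))"
    by (rule sum.cong) (simp_all add: T_def wt_def cc_def sum_distrib_left ac_simps)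
  finally show ?thesis .
qed


definition kept :: "nat set \<Rightarrow> nat set \<Rightarrow> nat set" where
  "kept U S = {i \<in> U. i \<in> S \<or> \<not> (\<exists>i'\<in>S. i' < i)}"

lemma monom_shift: "[:0, qq:] * monom c n = monom (qq * c) (Suc n)"
  by (simp add: monom_Suc smult_monom)

lemma H: "finite U \<Longrightarrow> (\<Sum>S\<in>Pow U. monom (qq ^ card S) (card (kept U S))) = mp (card U)"
proof (induction "card U" arbitrary: U)
  case 0
  then have "U = {}" by simp
  then show ?case by (simp add: kept_def)
next
  case (Suc n)
  define a where "a = Max U"
  define U' where "U' = U - {a}"
  have ne: "U \<noteq> {}" using Suc by auto
  have aU: "a \<in> U" using ne Suc.prems by (simp add: a_def)
  have U: "U = insert a U'" using aU by (auto simp: U'_def)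
  have aU': "a \<notin> U'" by (simp add: U'_def)
  have finU': "finite U'" using Suc.prems by (simp add: U'_def)
  have cU': "card U' = n" using Suc.hyps(2) U aU' finU' by simp
  have lt: "\<And>x. x \<in> U' \<Longrightarrow> x < a"
    using Suc.prems by (auto simp: U'_def a_def intro: Max_ge le_neq_trans)
  have k1: "card (kept U S) = card (kept U' S) + (if S = {} then 1 else 0)" if "S \<subseteq> U'" for S
  proof -
    have "kept U S = kept U' S \<union> (if S = {} then {a} else {})"
      using that lt aU' unfolding kept_def U by (auto dest: lt)
    moreover have "a \<notin> kept U' S" using aU' by (simp add: kept_def)
    moreover have "finite (kept U' S)" using finU' by (simp add: kept_def)
    ultimately show ?thesis by auto
  qed
  have k2: "card (kept U (insert a S)) = Suc (card (kept U' S))" if "S \<subseteq> U'" for S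
  proof -
    have "kept U (insert a S) = insert a (kept U' S)"
      using that lt aU' unfolding kept_def U by (auto dest: lt)
    moreover have "a \<notin> kept U' S" using aU' by (simp add: kept_def)
    moreover have "finite (kept U' S)" using finU' by (simp add: kept_def)
    ultimately show ?thesis by auto
  qed
  have kempty: "kept U' {} = U'" by (simp add: kept_def)
  have disj: "Pow U' \<inter> insert a ` Pow U' = {}" using aU' by auto
  have inj: "inj_on (insert a) (Pow U')" using aU' by (auto simp: inj_on_def)
  have "(\<Sum>S\<in>Pow U. monom (qq ^ card S) (card (kept U S)))
      = (\<Sum>S\<in>Pow U'. monom (qq ^ card S) (card (kept U S))) + (\<Sum>S\<in>insert a ` Pow U'. monom (qq ^ card S) (card (kept U S)))"
    unfolding U Pow_insert by (rule sum.union_disjoint) (use finU' disj in auto)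
  also have "(\<Sum>S\<in>insert a ` Pow U'. monom (qq ^ card S) (card (kept U S)))
      = (\<Sum>S\<in>Pow U'. monom (qq ^ card (insert a S)) (card (kept U (insert a S))))"
    by (rule sum.reindex[OF inj, unfolded comp_def])
  also have "\<dots> = (\<Sum>S\<in>Pow U'. [:0, qq:] * monom (qq ^ card S) (card (kept U' S)))"
  proof (rule sum.cong)
    fix S assume S: "S \<in> Pow U'"
    then have "a \<notin> S" "finite S" using aU' finU' finite_subset by auto
    then show "monom (qq ^ card (insert a S)) (card (kept U (insert a S))) = [:0, qq:] * monom (qq ^ card S) (card (kept U' S))"
      using k2 S by (simp add: monom_Suc smult_monom)
  qed simp
  also have "(\<Sum>S\<in>Pow U'. monom (qq ^ card S) (card (kept U S)))
      = (\<Sum>S\<in>Pow U'. monom (qq ^ card S) (card (kept U' S)) + (if S = {} then monom 1 (Suc n) - monom 1 n else 0))"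
  proof (rule sum.cong)
    fix S assume S: "S \<in> Pow U'"
    show "monom (qq ^ card S) (card (kept U S)) = monom (qq ^ card S) (card (kept U' S)) + (if S = {} then monom 1 (Suc n) - monom 1 n else 0)"
      using k1 S kempty cU' by auto
  qed simp
  also have "\<dots> = (\<Sum>S\<in>Pow U'. monom (qq ^ card S) (card (kept U' S))) + (monom 1 (Suc n) - monom 1 n)"
    using finU' by (simp add: sum.distrib)
  finally have eq: "(\<Sum>S\<in>Pow U. monom (qq ^ card S) (card (kept U S))) =
     (\<Sum>S\<in>Pow U'. monom (qq ^ card S) (card (kept U' S))) + (monom 1 (Suc n) - monom 1 n)
     + (\<Sum>S\<in>Pow U'. [:0, qq:] * monom (qq ^ card S) (card (kept U' S)))" .
  have IH: "(\<Sum>S\<in>Pow U'. monom (qq ^ card S) (card (kept U' S))) = mp n"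
    using Suc.hyps(1)[OF cU'[symmetric] finU'] cU' by simp
  have IH2: "(\<Sum>S\<in>Pow U'. [:0, qq:] * monom (qq ^ card S) (card (kept U' S))) = [:0, qq:] * mp n"
    by (simp only: IH sum_distrib_left[symmetric])
  have "(\<Sum>S\<in>Pow U. monom (qq ^ card S) (card (kept U S))) = mp (Suc n)"
    unfolding eq IH IH2 mp.simps by (simp only: algebra_simps)
  then show ?case using Suc.hyps(2) by simp
qed


definition blocked :: "nat \<Rightarrow> (nat \<Rightarrow> nat) \<Rightarrow> (nat \<times> nat) set \<Rightarrow> nat set" where
  "blocked k lam D = {i. \<exists>j. (i, j) \<in> young_cells k lam \<and> (i, j) \<notin> D \<and> (\<exists>i'<i. (i', j) \<in> D)}"

definition ub :: "nat \<Rightarrow> (nat \<Rightarrow> nat) \<times> (nat \<times> nat) set \<Rightarrow> nat" where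
  "ub k d = card ({1..k} - blocked k (fst d) (snd d))"

definition Wp :: "nat \<Rightarrow> nat \<Rightarrow> rat fls poly" where
  "Wp k m = (\<Sum>d\<in>LeDiagrams k (k + m). monom (qq ^ card (snd d)) (ub k d))"

lemma yc_iff: "(i, j) \<in> young_cells k lam \<longleftrightarrow> 1 \<le> i \<and> i \<le> k \<and> 1 \<le> j \<and> j \<le> lam i"
  by (simp add: young_cells_def)

lemma LeD_iff: "(lam, D) \<in> LeDiagrams k n \<longleftrightarrow> k \<le> n \<and>
     (\<forall>i. (i < 1 \<or> k < i) \<longrightarrow> lam i = 0) \<and>
     (\<forall>i. 1 \<le> i \<and> i < k \<longrightarrow> lam (Suc i) \<le> lam i) \<and>
     (k \<ge> 1 \<longrightarrow> lam 1 \<le> n - k) \<and>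
     D \<subseteq> young_cells k lam \<and>
     (\<forall>i j. (i, j) \<in> young_cells k lam - D \<longrightarrow>
        \<not> ((\<exists>i'. i' < i \<and> (i', j) \<in> D) \<and> (\<exists>j'. j' < j \<and> (i, j') \<in> D)))"
  unfolding LeDiagrams_def mem_Collect_eq prod.case by (rule refl)

lemma LeD_kn: "(lam, D) \<in> LeDiagrams k n \<Longrightarrow> k \<le> n"
  unfolding LeD_iff by (elim conjE)
lemma LeD_zero: "(lam, D) \<in> LeDiagrams k n \<Longrightarrow> i < 1 \<or> k < i \<Longrightarrow> lam i = 0"
  unfolding LeD_iff by (elim conjE) (erule allE, erule mp)
lemma LeD_step: "(lam, D) \<in> LeDiagrams k n \<Longrightarrow> 1 \<le> i \<Longrightarrow> i < k \<Longrightarrow> lam (Suc i) \<le> lam i"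
  unfolding LeD_iff by (elim conjE) simp
lemma LeD_first: "(lam, D) \<in> LeDiagrams k n \<Longrightarrow> 1 \<le> k \<Longrightarrow> lam 1 \<le> n - k"
  unfolding LeD_iff by (elim conjE) simp
lemma LeD_sub: "(lam, D) \<in> LeDiagrams k n \<Longrightarrow> D \<subseteq> young_cells k lam"
  unfolding LeD_iff by (elim conjE)
lemma LeD_cond: "(lam, D) \<in> LeDiagrams k n \<Longrightarrow> (i, j) \<in> young_cells k lam \<Longrightarrow> (i, j) \<notin> D \<Longrightarrow>
    i' < i \<Longrightarrow> (i', j) \<in> D \<Longrightarrow> j' < j \<Longrightarrow> (i, j') \<in> D \<Longrightarrow> False"
  unfolding LeD_iff by (elim conjE) blast

lemma LeD_mono: assumes d: "(lam, D) \<in> LeDiagrams k n" and "1 \<le> i" "i \<le> i'" "i' \<le> k"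
  shows "lam i' \<le> lam i"
  using assms(3,4)
proof (induction i' rule: dec_induct)
  case base then show ?case by simp
next
  case (step m)
  have "lam (Suc m) \<le> lam m" using LeD_step[OF d] step assms(2) by simp
  then show ?case using step by simp
qed

lemma LeD_le: assumes d: "(lam, D) \<in> LeDiagrams k n" shows "lam i \<le> n"
proof (cases "1 \<le> i \<and> i \<le> k")
  case True
  then have "lam i \<le> lam 1" using LeD_mono[OF d, of 1 i] by simp
  also have "\<dots> \<le> n - k" using LeD_first[OF d] True by simp
  finally show ?thesis by simp
next
  case False then have "i < 1 \<or> k < i" by auto
  then show ?thesis using LeD_zero[OF d] by simp
qed

lemma LeD_finite: "finite (LeDiagrams k n)"
proof -
  let ?L = "{f :: nat \<Rightarrow> nat. (\<forall>j. j \<notin> {1..k} \<longrightarrow> f j = 0) \<and> (\<forall>j. f j \<le> n)}"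
  have "LeDiagrams k n \<subseteq> ?L \<times> Pow ({1..k} \<times> {1..n})"
  proof
    fix d assume "d \<in> LeDiagrams k n"
    then obtain lam D where d: "d = (lam, D)" and dd: "(lam, D) \<in> LeDiagrams k n" by (cases d) auto
    have "lam \<in> ?L"
    proof -
      have "\<forall>j. j \<notin> {1..k} \<longrightarrow> lam j = 0"
      proof (intro allI impI)
        fix j assume "j \<notin> {1..k}" then have "j < 1 \<or> k < j" by auto
        then show "lam j = 0" by (rule LeD_zero[OF dd])
      qed
      then show ?thesis using LeD_le[OF dd] by blast
    qed
    moreover have "D \<subseteq> {1..k} \<times> {1..n}"
    proof
      fix c assume "c \<in> D"
      then obtain i j where c: "c = (i, j)" "(i, j) \<in> young_cells k lam" using LeD_sub[OF dd] by (cases c) auto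
      then have "j \<le> lam i" "1 \<le> j" "1 \<le> i" "i \<le> k" by (auto simp: yc_iff)
      moreover have "lam i \<le> n" by (rule LeD_le[OF dd])
      ultimately show "c \<in> {1..k} \<times> {1..n}" using c by auto
    qed
    ultimately show "d \<in> ?L \<times> Pow ({1..k} \<times> {1..n})" using d by auto
  qed
  moreover have "finite ?L" by (rule finite_funs) simp
  ultimately show ?thesis by (meson finite_Pow_iff finite_SigmaI finite_atLeastAtMost finite_subset)
qed

lemma LeD_empty: "n < k \<Longrightarrow> LeDiagrams k n = {}"
  using LeD_kn by fastforce

lemma A_kn_Wp: "A_kn k (k + m) = poly (Wp k m) 1"
  by (simp add: A_kn_def Wp_def poly_sum poly_monom rank_Le_def)

lemma LeD_0: "LeDiagrams 0 m = {(\<lambda>_. 0, {})}"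
proof (intro set_eqI iffI)
  fix d assume "d \<in> LeDiagrams 0 m"
  then obtain lam D where d: "d = (lam, D)" and dd: "(lam, D) \<in> LeDiagrams 0 m" by (cases d) auto
  have "lam i = 0" for i using LeD_zero[OF dd, of i] by arith
  moreover have "D = {}" using LeD_sub[OF dd] by (auto simp: yc_iff)
  ultimately show "d \<in> {(\<lambda>_. 0, {})}" using d by auto
qed (auto simp: LeD_iff young_cells_def)

lemma Wp_0: "Wp 0 m = 1"
  by (simp add: Wp_def LeD_0 ub_def)


lemma yc_Suc0: "lam (Suc k) = 0 \<Longrightarrow> young_cells (Suc k) lam = young_cells k lam"
  by (auto simp: young_cells_def le_Suc_eq)

lemma L0_fwd: assumes d: "(lam, D) \<in> LeDiagrams (Suc k) (Suc k + m)" and z: "lam (Suc k) = 0"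
  shows "(lam, D) \<in> LeDiagrams k (k + m)"
  unfolding LeD_iff
proof (intro conjI allI impI)
  show "k \<le> k + m" by simp
  fix i
  show "i < 1 \<or> k < i \<Longrightarrow> lam i = 0"
  proof -
    assume "i < 1 \<or> k < i"
    then consider "i < 1 \<or> Suc k < i" | "i = Suc k" by arith
    then show ?thesis by cases (use LeD_zero[OF d] z in auto)
  qed
  show "1 \<le> i \<and> i < k \<Longrightarrow> lam (Suc i) \<le> lam i" using LeD_step[OF d, of i] by simp
next
  show "1 \<le> k \<Longrightarrow> lam 1 \<le> k + m - k" using LeD_first[OF d] by simp
  show "D \<subseteq> young_cells k lam" using LeD_sub[OF d] yc_Suc0[of lam k, OF z] by simp
  fix i j
  show "(i, j) \<in> young_cells k lam - D \<Longrightarrow>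
       \<not> ((\<exists>i'. i' < i \<and> (i', j) \<in> D) \<and> (\<exists>j'. j' < j \<and> (i, j') \<in> D))"
    using LeD_cond[OF d] yc_Suc0[of lam k, OF z] by blast
qed

lemma L0_bwd: assumes d: "(lam, D) \<in> LeDiagrams k (k + m)"
  shows "(lam, D) \<in> LeDiagrams (Suc k) (Suc k + m)" "lam (Suc k) = 0"
proof -
  show z: "lam (Suc k) = 0" using LeD_zero[OF d, of "Suc k"] by simp
  show "(lam, D) \<in> LeDiagrams (Suc k) (Suc k + m)"
    unfolding LeD_iff
  proof (intro conjI allI impI)
    show "Suc k \<le> Suc k + m" by simp
    fix i
    show "i < 1 \<or> Suc k < i \<Longrightarrow> lam i = 0" using LeD_zero[OF d, of i] by auto
    show "1 \<le> i \<and> i < Suc k \<Longrightarrow> lam (Suc i) \<le> lam i"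
    proof -
      assume i: "1 \<le> i \<and> i < Suc k"
      then consider "i < k" | "i = k" by arith
      then show ?thesis by cases (use LeD_step[OF d, of i] i z in auto)
    qed
  next
    show "lam 1 \<le> Suc k + m - Suc k"
    proof (cases "k = 0")
      case True then show ?thesis using LeD_zero[OF d, of 1] by simp
    next
      case False then show ?thesis using LeD_first[OF d] by simp
    qed
    show "D \<subseteq> young_cells (Suc k) lam" using LeD_sub[OF d] yc_Suc0[of lam k, OF z] by simp
    fix i j
    show "(i, j) \<in> young_cells (Suc k) lam - D \<Longrightarrow>
       \<not> ((\<exists>i'. i' < i \<and> (i', j) \<in> D) \<and> (\<exists>j'. j' < j \<and> (i, j') \<in> D))"
      using LeD_cond[OF d] yc_Suc0[of lam k, OF z] by blast
  qed
qed

lemma L0_set: "{d \<in> LeDiagrams (Suc k) (Suc k + m). fst d (Suc k) = 0} = LeDiagrams k (k + m)"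
proof (intro set_eqI iffI)
  fix d assume "d \<in> {d \<in> LeDiagrams (Suc k) (Suc k + m). fst d (Suc k) = 0}"
  then show "d \<in> LeDiagrams k (k + m)" using L0_fwd by (cases d) auto
next
  fix d assume "d \<in> LeDiagrams k (k + m)"
  then show "d \<in> {d \<in> LeDiagrams (Suc k) (Suc k + m). fst d (Suc k) = 0}" using L0_bwd by (cases d) auto
qed

lemma blocked_sub: "blocked k lam D \<subseteq> {1..k}"
  by (auto simp: blocked_def yc_iff)

lemma ub_L0: assumes z: "lam (Suc k) = 0" shows "ub (Suc k) (lam, D) = Suc (ub k (lam, D))"
proof -
  have b: "blocked (Suc k) lam D = blocked k lam D" by (simp add: blocked_def yc_Suc0[of lam k, OF z])
  have "{1..Suc k} - blocked k lam D = insert (Suc k) ({1..k} - blocked k lam D)"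
    using blocked_sub[of k lam D] by auto
  then show ?thesis by (simp add: ub_def b)
qed

lemma Z_monom: "Z * monom c n = monom c (Suc n)"
  by (simp add: monom_Suc)

lemma Wp_split: "Wp (Suc k) m = Z * Wp k m +
   (\<Sum>d\<in>{d \<in> LeDiagrams (Suc k) (Suc k + m). fst d (Suc k) \<noteq> 0}. monom (qq ^ card (snd d)) (ub (Suc k) d))"
proof -
  let ?A = "{d \<in> LeDiagrams (Suc k) (Suc k + m). fst d (Suc k) = 0}"
  let ?B = "{d \<in> LeDiagrams (Suc k) (Suc k + m). fst d (Suc k) \<noteq> 0}"
  let ?f = "\<lambda>d. monom (qq ^ card (snd d)) (ub (Suc k) d)"
  have split: "LeDiagrams (Suc k) (Suc k + m) = ?A \<union> ?B" by auto
  have fin: "finite ?A" "finite ?B" using LeD_finite by auto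
  have "Wp (Suc k) m = sum ?f ?A + sum ?f ?B"
    unfolding Wp_def by (subst split, rule sum.union_disjoint) (use fin in auto)
  also have "sum ?f ?A = (\<Sum>d\<in>LeDiagrams k (k + m). Z * monom (qq ^ card (snd d)) (ub k d))"
  proof (unfold L0_set, rule sum.cong)
    fix d assume dd: "d \<in> LeDiagrams k (k + m)"
    obtain lam D where d: "d = (lam, D)" by (cases d)
    have z: "lam (Suc k) = 0" using L0_bwd(2) dd d by simp
    show "?f d = Z * monom (qq ^ card (snd d)) (ub k d)"
      using ub_L0[of lam k D, OF z] d by (simp add: monom_Suc)
  qed simp
  finally show ?thesis by (simp add: Wp_def sum_distrib_left)
qed

lemma Wp_Suc_0: "Wp (Suc k) 0 = Z * Wp k 0"
proof -
  have E: "{d \<in> LeDiagrams (Suc k) (Suc k + 0). fst d (Suc k) \<noteq> 0} = {}"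
  proof -
    have "lam (Suc k) = 0" if d: "(lam, D) \<in> LeDiagrams (Suc k) (Suc k)" for lam D
    proof -
      have "lam (Suc k) \<le> lam 1" using LeD_mono[OF d, of 1 "Suc k"] by simp
      also have "\<dots> \<le> 0" using LeD_first[OF d] by simp
      finally show ?thesis by simp
    qed
    then show ?thesis by fastforce
  qed
  from Wp_split[of k 0] show ?thesis unfolding E by simp
qed


definition fwdL :: "nat \<Rightarrow> (nat \<Rightarrow> nat) \<Rightarrow> nat \<Rightarrow> nat" where
  "fwdL K lam = (\<lambda>i. if 1 \<le> i \<and> i \<le> K then Suc (lam i) else 0)"
definition fwdD :: "(nat \<times> nat) set \<Rightarrow> nat set \<Rightarrow> (nat \<times> nat) set" where
  "fwdD D S = (\<lambda>(i, j). (i, Suc j)) ` D \<union> (\<lambda>i. (i, 1)) ` S"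
definition bwdL :: "(nat \<Rightarrow> nat) \<Rightarrow> nat \<Rightarrow> nat" where
  "bwdL lam = (\<lambda>i. lam i - 1)"
definition bwdD :: "(nat \<times> nat) set \<Rightarrow> (nat \<times> nat) set" where
  "bwdD D = {(i, j). 1 \<le> j \<and> (i, Suc j) \<in> D}"
definition bwdS :: "(nat \<times> nat) set \<Rightarrow> nat set" where
  "bwdS D = {i. (i, 1) \<in> D}"

lemma fwdD_0: "(i, 0) \<notin> fwdD D S"
  by (auto simp: fwdD_def)
lemma fwdD_img: "(i, j) \<in> D \<Longrightarrow> (i, Suc j) \<in> fwdD D S"
  unfolding fwdD_def by (rule UnI1, rule rev_image_eqI[of "(i, j)"]) auto
lemma fwdD_1: "(i, Suc 0) \<in> fwdD D S \<longleftrightarrow> i \<in> S \<or> (i, 0) \<in> D"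
  using fwdD_img[of i 0 D S] by (auto simp: fwdD_def)
lemma fwdD_Suc: "1 \<le> j \<Longrightarrow> (i, Suc j) \<in> fwdD D S \<longleftrightarrow> (i, j) \<in> D"
  using fwdD_img[of i j D S] by (auto simp: fwdD_def)

lemma LeD_j: "(lam, D) \<in> LeDiagrams k n \<Longrightarrow> (i, j) \<in> D \<Longrightarrow> 1 \<le> j \<and> 1 \<le> i \<and> i \<le> k \<and> j \<le> lam i"
  using LeD_sub[of lam D k n] by (auto simp: yc_iff)

lemma F1:
  assumes d: "(lam, D) \<in> LeDiagrams K (K + m)" and S: "S \<subseteq> {1..K} - blocked K lam D" and K: "1 \<le> K"
  shows "(fwdL K lam, fwdD D S) \<in> LeDiagrams K (K + Suc m)" "fwdL K lam K \<noteq> 0"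
proof -
  show "fwdL K lam K \<noteq> 0" using K by (simp add: fwdL_def)
  show "(fwdL K lam, fwdD D S) \<in> LeDiagrams K (K + Suc m)"
    unfolding LeD_iff
  proof (intro conjI allI impI)
    show "K \<le> K + Suc m" by simp
    fix i
    show "i < 1 \<or> K < i \<Longrightarrow> fwdL K lam i = 0" by (auto simp: fwdL_def)
    show "1 \<le> i \<and> i < K \<Longrightarrow> fwdL K lam (Suc i) \<le> fwdL K lam i"
      using LeD_step[OF d, of i] by (auto simp: fwdL_def)
  next
    show "fwdL K lam 1 \<le> K + Suc m - K" using LeD_first[OF d] K by (simp add: fwdL_def)
    show "fwdD D S \<subseteq> young_cells K (fwdL K lam)"
    proof
      fix c assume c: "c \<in> fwdD D S"
      then consider (a) i j where "c = (i, Suc j)" "(i, j) \<in> D" | (b) i where "c = (i, 1)" "i \<in> S"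
        by (auto simp: fwdD_def)
      then show "c \<in> young_cells K (fwdL K lam)"
      proof cases
        case a then show ?thesis using LeD_j[OF d a(2)] by (auto simp: yc_iff fwdL_def)
      next
        case b then show ?thesis using S by (auto simp: yc_iff fwdL_def)
      qed
    qed
    fix i j
    show "(i, j) \<in> young_cells K (fwdL K lam) - fwdD D S \<Longrightarrow>
       \<not> ((\<exists>i'. i' < i \<and> (i', j) \<in> fwdD D S) \<and> (\<exists>j'. j' < j \<and> (i, j') \<in> fwdD D S))"
    proof (intro notI, elim conjE exE DiffE)
      fix i' j'
      assume yc: "(i, j) \<in> young_cells K (fwdL K lam)" and nD: "(i, j) \<notin> fwdD D S"
        and i': "i' < i" "(i', j) \<in> fwdD D S" and j': "j' < j" "(i, j') \<in> fwdD D S"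
      have iK: "1 \<le> i" "i \<le> K" "1 \<le> j" "j \<le> Suc (lam i)" using yc by (auto simp: yc_iff fwdL_def split: if_splits)
      have j'0: "j' \<noteq> 0" using j'(2) fwdD_0 by metis
      then have "j \<noteq> Suc 0" using j' by auto
      then obtain j0 where j0: "j = Suc j0" "1 \<le> j0" using iK by (cases j) auto
      have c1: "(i, j0) \<in> young_cells K lam" using iK j0 by (auto simp: yc_iff)
      have c2: "(i, j0) \<notin> D" using nD fwdD_Suc[OF j0(2)] j0 by simp
      have c3: "(i', j0) \<in> D" using i'(2) fwdD_Suc[OF j0(2)] j0 by simp
      show False
      proof (cases "j' = Suc 0")
        case True
        then have "i \<in> S \<or> (i, 0) \<in> D" using j'(2) fwdD_1 by simp
        moreover have "(i, 0) \<notin> D" using LeD_j[OF d] by fastforce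
        ultimately have "i \<in> S" by simp
        moreover have "i \<in> blocked K lam D" unfolding blocked_def using c1 c2 c3 i'(1) by blast
        ultimately show False using S by auto
      next
        case False
        then obtain j1 where j1: "j' = Suc j1" "1 \<le> j1" using j'0 by (cases j') auto
        have "(i, j1) \<in> D" using j'(2) fwdD_Suc[OF j1(2)] j1 by simp
        moreover have "j1 < j0" using j' j0 j1 by simp
        ultimately show False using LeD_cond[OF d c1 c2 i'(1) c3] by blast
      qed
    qed
  qed
qed

lemma F2:
  assumes d: "(lam, D) \<in> LeDiagrams K (K + Suc m)" and nz: "lam K \<noteq> 0" and K: "1 \<le> K"
  shows "(bwdL lam, bwdD D) \<in> LeDiagrams K (K + m)" "bwdS D \<subseteq> {1..K} - blocked K (bwdL lam) (bwdD D)"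
proof -
  show "(bwdL lam, bwdD D) \<in> LeDiagrams K (K + m)"
    unfolding LeD_iff
  proof (intro conjI allI impI)
    show "K \<le> K + m" by simp
    fix i
    show "i < 1 \<or> K < i \<Longrightarrow> bwdL lam i = 0" using LeD_zero[OF d, of i] by (simp add: bwdL_def)
    show "1 \<le> i \<and> i < K \<Longrightarrow> bwdL lam (Suc i) \<le> bwdL lam i"
      using LeD_step[OF d, of i] by (auto simp: bwdL_def)
  next
    show "bwdL lam 1 \<le> K + m - K" using LeD_first[OF d] K by (simp add: bwdL_def)
    show "bwdD D \<subseteq> young_cells K (bwdL lam)"
    proof
      fix c assume "c \<in> bwdD D"
      then obtain i j where c: "c = (i, j)" "1 \<le> j" "(i, Suc j) \<in> D" by (auto simp: bwdD_def)
      then show "c \<in> young_cells K (bwdL lam)" using LeD_j[OF d c(3)] by (auto simp: yc_iff bwdL_def)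
    qed
    fix i j
    show "(i, j) \<in> young_cells K (bwdL lam) - bwdD D \<Longrightarrow>
       \<not> ((\<exists>i'. i' < i \<and> (i', j) \<in> bwdD D) \<and> (\<exists>j'. j' < j \<and> (i, j') \<in> bwdD D))"
    proof (intro notI, elim conjE exE DiffE)
      fix i' j'
      assume yc: "(i, j) \<in> young_cells K (bwdL lam)" and nD: "(i, j) \<notin> bwdD D"
        and i': "i' < i" "(i', j) \<in> bwdD D" and j': "j' < j" "(i, j') \<in> bwdD D"
      have c1: "(i, Suc j) \<in> young_cells K lam" using yc by (auto simp: yc_iff bwdL_def)
      have j1: "1 \<le> j" using yc by (simp add: yc_iff)
      have c2: "(i, Suc j) \<notin> D" using nD j1 by (simp add: bwdD_def)
      have c3: "(i', Suc j) \<in> D" using i' by (simp add: bwdD_def)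
      have c4: "(i, Suc j') \<in> D" using j' by (simp add: bwdD_def)
      show False using LeD_cond[OF d c1 c2 i'(1) c3, of "Suc j'"] c4 j' by simp
    qed
  qed
  show "bwdS D \<subseteq> {1..K} - blocked K (bwdL lam) (bwdD D)"
  proof
    fix i assume "i \<in> bwdS D"
    then have i1: "(i, 1) \<in> D" by (simp add: bwdS_def)
    have iK: "i \<in> {1..K}" using LeD_j[OF d i1] by simp
    have "i \<notin> blocked K (bwdL lam) (bwdD D)"
    proof
      assume "i \<in> blocked K (bwdL lam) (bwdD D)"
      then obtain j i' where yc: "(i, j) \<in> young_cells K (bwdL lam)" and nD: "(i, j) \<notin> bwdD D"
        and i': "i' < i" "(i', j) \<in> bwdD D" by (auto simp: blocked_def)
      have c1: "(i, Suc j) \<in> young_cells K lam" using yc by (auto simp: yc_iff bwdL_def)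
      have j1: "1 \<le> j" using yc by (simp add: yc_iff)
      have c2: "(i, Suc j) \<notin> D" using nD j1 by (simp add: bwdD_def)
      have c3: "(i', Suc j) \<in> D" using i' by (simp add: bwdD_def)
      show False using LeD_cond[OF d c1 c2 i'(1) c3, of 1] i1 j1 by simp
    qed
    then show "i \<in> {1..K} - blocked K (bwdL lam) (bwdD D)" using iK by simp
  qed
qed

lemma F3:
  assumes d: "(lam, D) \<in> LeDiagrams K (K + m)" and S: "S \<subseteq> {1..K} - blocked K lam D"
  shows "bwdL (fwdL K lam) = lam" "bwdD (fwdD D S) = D" "bwdS (fwdD D S) = S"
proof -
  show "bwdL (fwdL K lam) = lam"
  proof
    fix i show "bwdL (fwdL K lam) i = lam i"
      using LeD_zero[OF d, of i] by (auto simp: bwdL_def fwdL_def)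
  qed
  show "bwdD (fwdD D S) = D"
  proof (intro set_eqI)
    fix c show "c \<in> bwdD (fwdD D S) \<longleftrightarrow> c \<in> D"
    proof (cases c)
      case (Pair i j)
      show ?thesis
      proof (cases "1 \<le> j")
        case True then show ?thesis using Pair fwdD_Suc[OF True] by (simp add: bwdD_def)
      next
        case False then show ?thesis using Pair LeD_j[OF d, of i j] by (auto simp: bwdD_def)
      qed
    qed
  qed
  show "bwdS (fwdD D S) = S"
    using LeD_j[OF d] fwdD_1 by (fastforce simp: bwdS_def)
qed

lemma F4:
  assumes d: "(lam, D) \<in> LeDiagrams K (K + Suc m)" and nz: "lam K \<noteq> 0"
  shows "fwdL K (bwdL lam) = lam" "fwdD (bwdD D) (bwdS D) = D"
proof -
  show "fwdL K (bwdL lam) = lam"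
  proof
    fix i show "fwdL K (bwdL lam) i = lam i"
    proof (cases "1 \<le> i \<and> i \<le> K")
      case True
      then have "lam K \<le> lam i" using LeD_mono[OF d, of i K] by simp
      then show ?thesis using True nz by (simp add: fwdL_def bwdL_def)
    next
      case False then show ?thesis using LeD_zero[OF d, of i] by (auto simp: fwdL_def)
    qed
  qed
  show "fwdD (bwdD D) (bwdS D) = D"
  proof (intro set_eqI)
    fix c show "c \<in> fwdD (bwdD D) (bwdS D) \<longleftrightarrow> c \<in> D"
    proof (cases c)
      case (Pair i j)
      consider "j = 0" | "j = Suc 0" | "1 < j" by arith
      then show ?thesis
      proof cases
        case 1 then show ?thesis using Pair fwdD_0 LeD_j[OF d, of i 0] by auto
      next
        case 2 then show ?thesis using Pair fwdD_1 by (simp add: bwdS_def bwdD_def)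
      next
        case 3
        then obtain j0 where j0: "j = Suc j0" "1 \<le> j0" by (cases j) auto
        then show ?thesis using Pair fwdD_Suc[OF j0(2)] by (simp add: bwdD_def)
      qed
    qed
  qed
qed


lemma LeD_Dfin: assumes d: "(lam, D) \<in> LeDiagrams k n" shows "finite D"
proof -
  have "D \<subseteq> {1..k} \<times> {1..n}"
  proof
    fix c assume c: "c \<in> D"
    obtain i j where cij: "c = (i, j)" by (cases c)
    have "1 \<le> j \<and> 1 \<le> i \<and> i \<le> k \<and> j \<le> lam i" using LeD_j[OF d] c cij by simp
    moreover have "lam i \<le> n" by (rule LeD_le[OF d])
    ultimately show "c \<in> {1..k} \<times> {1..n}" using cij by auto
  qed
  then show ?thesis by (rule finite_subset) simp
qed

lemma F5:
  assumes d: "(lam, D) \<in> LeDiagrams K (K + m)" and S: "S \<subseteq> {1..K}"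
  shows "card (fwdD D S) = card D + card S"
proof -
  have fD: "finite D" by (rule LeD_Dfin[OF d])
  have fS: "finite S" using S finite_subset by auto
  have disj: "(\<lambda>(i, j). (i, Suc j)) ` D \<inter> (\<lambda>i. (i, 1)) ` S = {}"
    using LeD_j[OF d] by fastforce
  have i1: "inj_on (\<lambda>(i, j). (i, Suc j)) D" by (auto simp: inj_on_def)
  have i2: "inj_on (\<lambda>i. (i, 1::nat)) S" by (auto simp: inj_on_def)
  show ?thesis unfolding fwdD_def
    using card_Un_disjoint[OF finite_imageI[OF fD] finite_imageI[OF fS] disj] card_image[OF i1] card_image[OF i2]
    by simp
qed

lemma F6:
  assumes d: "(lam, D) \<in> LeDiagrams K (K + m)" and S: "S \<subseteq> {1..K} - blocked K lam D"
  shows "blocked K (fwdL K lam) (fwdD D S) = blocked K lam D \<union> {i. 1 \<le> i \<and> i \<le> K \<and> i \<notin> S \<and> (\<exists>i'\<in>S. i' < i)}"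
proof (intro set_eqI iffI)
  fix i assume "i \<in> blocked K (fwdL K lam) (fwdD D S)"
  then obtain j i' where yc: "(i, j) \<in> young_cells K (fwdL K lam)" and nD: "(i, j) \<notin> fwdD D S"
    and i': "i' < i" "(i', j) \<in> fwdD D S" by (auto simp: blocked_def)
  have iK: "1 \<le> i" "i \<le> K" "1 \<le> j" "j \<le> Suc (lam i)" using yc by (auto simp: yc_iff fwdL_def split: if_splits)
  have nD0: "\<And>a. (a, 0) \<notin> D" using LeD_j[OF d] by fastforce
  show "i \<in> blocked K lam D \<union> {i. 1 \<le> i \<and> i \<le> K \<and> i \<notin> S \<and> (\<exists>i'\<in>S. i' < i)}"
  proof (cases "j = Suc 0")
    case True
    then have "i \<notin> S" "i' \<in> S" using nD i'(2) fwdD_1 nD0 by auto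
    then show ?thesis using iK i'(1) by auto
  next
    case False
    then obtain j0 where j0: "j = Suc j0" "1 \<le> j0" using iK by (cases j) auto
    have "(i, j0) \<in> young_cells K lam" using iK j0 by (auto simp: yc_iff)
    moreover have "(i, j0) \<notin> D" using nD fwdD_Suc[OF j0(2)] j0 by simp
    moreover have "(i', j0) \<in> D" using i'(2) fwdD_Suc[OF j0(2)] j0 by simp
    ultimately show ?thesis using i'(1) unfolding blocked_def by blast
  qed
next
  fix i assume "i \<in> blocked K lam D \<union> {i. 1 \<le> i \<and> i \<le> K \<and> i \<notin> S \<and> (\<exists>i'\<in>S. i' < i)}"
  then consider "i \<in> blocked K lam D" | "1 \<le> i" "i \<le> K" "i \<notin> S" "\<exists>i'\<in>S. i' < i" by auto
  then show "i \<in> blocked K (fwdL K lam) (fwdD D S)"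
  proof cases
    case 1
    then obtain j i' where yc: "(i, j) \<in> young_cells K lam" and nD: "(i, j) \<notin> D"
      and i': "i' < i" "(i', j) \<in> D" by (auto simp: blocked_def)
    have j1: "1 \<le> j" using yc by (simp add: yc_iff)
    have "(i, Suc j) \<in> young_cells K (fwdL K lam)" using yc by (auto simp: yc_iff fwdL_def)
    moreover have "(i, Suc j) \<notin> fwdD D S" using nD fwdD_Suc[OF j1] by simp
    moreover have "(i', Suc j) \<in> fwdD D S" using i'(2) fwdD_Suc[OF j1] by simp
    ultimately show ?thesis using i'(1) unfolding blocked_def by blast
  next
    case 2
    have nD0: "\<And>a. (a, 0) \<notin> D" using LeD_j[OF d] by fastforce
    obtain i' where i': "i' \<in> S" "i' < i" using 2 by auto
    have "(i, Suc 0) \<in> young_cells K (fwdL K lam)" using 2 by (auto simp: yc_iff fwdL_def)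
    moreover have "(i, Suc 0) \<notin> fwdD D S" using 2 fwdD_1 nD0 by auto
    moreover have "(i', Suc 0) \<in> fwdD D S" using i' fwdD_1 by auto
    ultimately show ?thesis using i'(2) unfolding blocked_def by blast
  qed
qed

definition fwd :: "nat \<Rightarrow> ((nat \<Rightarrow> nat) \<times> (nat \<times> nat) set) \<times> nat set \<Rightarrow> (nat \<Rightarrow> nat) \<times> (nat \<times> nat) set" where
  "fwd K p = (fwdL K (fst (fst p)), fwdD (snd (fst p)) (snd p))"
definition bwd :: "(nat \<Rightarrow> nat) \<times> (nat \<times> nat) set \<Rightarrow> ((nat \<Rightarrow> nat) \<times> (nat \<times> nat) set) \<times> nat set" where
  "bwd d = ((bwdL (fst d), bwdD (snd d)), bwdS (snd d))"

abbreviation UU :: "nat \<Rightarrow> (nat \<Rightarrow> nat) \<times> (nat \<times> nat) set \<Rightarrow> nat set" where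
  "UU K d \<equiv> {1..K} - blocked K (fst d) (snd d)"

lemma G:
  assumes d: "(lam, D) \<in> LeDiagrams K (K + m)" and S: "S \<subseteq> UU K (lam, D)"
  shows "monom (qq ^ card (snd (fwd K ((lam, D), S)))) (ub K (fwd K ((lam, D), S)))
       = monom (qq ^ (card D + card S)) (card (kept (UU K (lam, D)) S))"
proof -
  have S1: "S \<subseteq> {1..K}" using S by auto
  have S2: "S \<subseteq> {1..K} - blocked K lam D" using S by simp
  have "card (snd (fwd K ((lam, D), S))) = card D + card S"
    by (simp add: fwd_def F5[OF d S1])
  moreover have "{1..K} - blocked K (fwdL K lam) (fwdD D S) = kept (UU K (lam, D)) S"
    unfolding F6[OF d S2] kept_def by auto
  ultimately show ?thesis by (simp add: fwd_def ub_def)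
qed

lemma smult_sum2: "smult c (sum f A) = (\<Sum>i\<in>A. smult c (f i))"
  by (induction A rule: infinite_finite_induct) (simp_all add: smult_add_right)

lemma L1_sum:
  "(\<Sum>d\<in>{d \<in> LeDiagrams (Suc k) (Suc k + Suc m). fst d (Suc k) \<noteq> 0}. monom (qq ^ card (snd d)) (ub (Suc k) d))
   = (\<Sum>d\<in>LeDiagrams (Suc k) (Suc k + m). smult (qq ^ card (snd d)) (mp (ub (Suc k) d)))"
proof -
  let ?K = "Suc k"
  let ?L1 = "{d \<in> LeDiagrams (Suc k) (Suc k + Suc m). fst d (Suc k) \<noteq> 0}"
  let ?Sg = "Sigma (LeDiagrams ?K (?K + m)) (\<lambda>d. Pow (UU ?K d))"
  let ?g = "\<lambda>d. monom (qq ^ card (snd d)) (ub ?K d)"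
  let ?h = "\<lambda>p. monom (qq ^ (card (snd (fst p)) + card (snd p))) (card (kept (UU ?K (fst p)) (snd p)))"
  have "sum ?g ?L1 = sum ?h ?Sg"
  proof (rule sum.reindex_bij_witness[where j = bwd and i = "fwd ?K"])
    fix a assume a: "a \<in> ?L1"
    obtain lam D where aa: "a = (lam, D)" by (cases a)
    have d: "(lam, D) \<in> LeDiagrams ?K (?K + Suc m)" and nz: "lam ?K \<noteq> 0" using a aa by auto
    show "fwd ?K (bwd a) = a" using F4[OF d nz] aa by (simp add: fwd_def bwd_def)
    show b: "bwd a \<in> ?Sg" using F2[OF d nz] aa by (simp add: bwd_def)
    have "?h (bwd a) = ?g (fwd ?K (bwd a))"
      using G[of "bwdL lam" "bwdD D" ?K m "bwdS D"] F2[OF d nz] aa by (simp add: bwd_def)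
    then show "?h (bwd a) = ?g a" using F4[OF d nz] aa by (simp add: fwd_def bwd_def)
  next
    fix b assume b: "b \<in> ?Sg"
    obtain lam D S where bb: "b = ((lam, D), S)" by (cases b) auto
    have d: "(lam, D) \<in> LeDiagrams ?K (?K + m)" and S: "S \<subseteq> {1..?K} - blocked ?K lam D" using b bb by auto
    show "bwd (fwd ?K b) = b" using F3[OF d S] bb by (simp add: fwd_def bwd_def)
    show "fwd ?K b \<in> ?L1" using F1[OF d S] bb by (simp add: fwd_def)
  qed
  also have "\<dots> = (\<Sum>d\<in>LeDiagrams ?K (?K + m). \<Sum>S\<in>Pow (UU ?K d). ?h (d, S))"
  proof -
    have fin1: "finite (LeDiagrams ?K (?K + m))" by (rule LeD_finite)
    have fin2: "\<forall>d\<in>LeDiagrams ?K (?K + m). finite (Pow (UU ?K d))" by simp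
    have "(\<Sum>d\<in>LeDiagrams ?K (?K + m). \<Sum>S\<in>Pow (UU ?K d). ?h (d, S)) = (\<Sum>(d, S)\<in>?Sg. ?h (d, S))"
      by (rule sum.Sigma[OF fin1 fin2])
    then show ?thesis by (simp add: case_prod_beta)
  qed
  also have "\<dots> = (\<Sum>d\<in>LeDiagrams ?K (?K + m). smult (qq ^ card (snd d)) (mp (ub ?K d)))"
  proof (rule sum.cong)
    fix d assume "d \<in> LeDiagrams ?K (?K + m)"
    have "(\<Sum>S\<in>Pow (UU ?K d). ?h (d, S)) = smult (qq ^ card (snd d)) (\<Sum>S\<in>Pow (UU ?K d). monom (qq ^ card S) (card (kept (UU ?K d) S)))"
      by (simp add: smult_sum2 smult_monom power_add)
    also have "\<dots> = smult (qq ^ card (snd d)) (mp (ub ?K d))"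
      by (simp add: H ub_def)
    finally show "(\<Sum>S\<in>Pow (UU ?K d). ?h (d, S)) = smult (qq ^ card (snd d)) (mp (ub ?K d))" .
  qed simp
  finally show ?thesis .
qed

lemma pcompose_Zpow: "pcompose ([:0, 1:] ^ n) p = p ^ n"
  by (induction n) (simp_all add: pcompose_mult pcompose_pCons pcompose_1)

lemma pcompose_monom': "pcompose (monom c n) p = smult c (p ^ n)"
  by (simp add: monom_altdef pcompose_smult pcompose_Zpow)

lemma Wp_R2: "dlt * Wp (Suc k) (Suc m) = [:0, qq:] * pcompose (Wp (Suc k) m) phi + [:1, -1:] * Wp (Suc k) m + dlt * (Z * Wp k (Suc m))"
proof -
  let ?D = "LeDiagrams (Suc k) (Suc k + m)"
  have "dlt * Wp (Suc k) (Suc m) = dlt * (Z * Wp k (Suc m)) + (\<Sum>d\<in>?D. smult (qq ^ card (snd d)) (dlt * mp (ub (Suc k) d)))"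
    unfolding Wp_split L1_sum by (simp add: distrib_left sum_distrib_left mult_smult_right)
  also have "(\<Sum>d\<in>?D. smult (qq ^ card (snd d)) (dlt * mp (ub (Suc k) d)))
     = [:0, qq:] * (\<Sum>d\<in>?D. smult (qq ^ card (snd d)) (phi ^ ub (Suc k) d)) + [:1, -1:] * (\<Sum>d\<in>?D. monom (qq ^ card (snd d)) (ub (Suc k) d))"
    unfolding mp_key by (simp add: sum_distrib_left sum.distrib smult_add_right mult_smult_right smult_monom)
  also have "(\<Sum>d\<in>?D. smult (qq ^ card (snd d)) (phi ^ ub (Suc k) d)) = pcompose (Wp (Suc k) m) phi"
    by (simp add: Wp_def pcompose_sum pcompose_monom')
  also have "(\<Sum>d\<in>?D. monom (qq ^ card (snd d)) (ub (Suc k) d)) = Wp (Suc k) m"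
    by (simp add: Wp_def)
  finally show ?thesis by (simp add: algebra_simps)
qed

theorem mainTheorem4:
  fixes k :: nat
  assumes "k \<ge> 1"
  shows "A_gf k =
    (\<Sum>i=1..k. \<Sum>t\<in>tseqs k i.
       fps_const ((-1) ^ (k + i) * fls_X_intpow (- (int i * int k) + (\<Sum>j=1..i. int (t j))))
       * fps_X ^ k * inverse (1 - fps_X)
       * (\<Prod>j=1..i. (fps_const (qint j) * inverse (1 - fps_const (qint (j + 1)) * fps_X))
                        ^ (t (j + 1) - t j)))"
proof (rule assembly[OF assms])
  fix n assume "n < k"
  then show "A_kn k n = 0" by (simp add: A_kn_def LeD_empty)
next
  fix m
  have W: "Wp k m = (\<Sum>j\<le>k. smult (om k m j) (Ep j))"
    by (rule W_expand[where W = Wp, OF Wp_0 Wp_Suc_0 Wp_R2])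
  show "A_kn k (k + m) = (\<Sum>j\<le>k. om k m j)"
    unfolding A_kn_Wp W by (simp add: poly_sum poly_Ep1)
qed


end
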